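(* Let $\mathbb Z^\infty=\bigoplus_{\mathbb N}\mathbb Z$ and, for a weight function $w:\mathbb N\to\mathbb R_{>0}$, let $d_w(x,y)=\sum_{j\ge0}w(j)|x_j-y_j|$. Then $(\mathbb Z^\infty,d_{w_1})$ with $w_1(n)=n+1$ and $(\mathbb Z^\infty,d_{w_2})$ with $w_2(n)=1$ are not coarsely equivalent: there are no coarse maps $f:(\mathbb Z^\infty,d_{w_1})\to(\mathbb Z^\infty,d_{w_2})$ and $g:(\mathbb Z^\infty,d_{w_2})\to(\mathbb Z^\infty,d_{w_1})$ such that $g\circ f$ is close to the identity of $\mathbb Z^\infty$ and $f\circ g$ is close to the identity of $\mathbb Z^\infty$.
   Context: $\mathbb Z^\infty$ is the set of integer sequences $(x_0,x_1,\dots)$ with only finitely many nonzero entries. A map $f:(X,d_X)\to(Y,d_Y)$ between metric spaces is coarse if it is uniformly expansive (for every $R>0$ there is $S>0$ with $d_Y(fx,fx')\le S$ whenever $d_X(x,x')\le R$) and metrically proper (preimages of bounded sets are bounded). Two maps $f,f':X\to Y$ are close if $\sup_{x}d_Y(fx,f'x)<\infty$. *)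

theory Defs
  imports "HOL-Analysis.Analysis"
begin

definition Zinf :: "(nat \<Rightarrow> int) set" where
  "Zinf = {x. finite {j. x j \<noteq> 0}}"

definition dw :: "(nat \<Rightarrow> real) \<Rightarrow> (nat \<Rightarrow> int) \<Rightarrow> (nat \<Rightarrow> int) \<Rightarrow> real" where
  "dw w x y = (\<Sum>j\<in>{j. x j \<noteq> y j}. w j * real_of_int \<bar>x j - y j\<bar>)"

definition mbounded :: "'a set \<Rightarrow> ('a \<Rightarrow> 'a \<Rightarrow> real) \<Rightarrow> 'a set \<Rightarrow> bool" where
  "mbounded X d B \<longleftrightarrow> B \<subseteq> X \<and> (\<exists>c\<in>X. \<exists>r. \<forall>y\<in>B. d c y \<le> r)"

definition coarse_map ::
  "'a set \<Rightarrow> ('a \<Rightarrow> 'a \<Rightarrow> real) \<Rightarrow> 'b set \<Rightarrow> ('b \<Rightarrow> 'b \<Rightarrow> real) \<Rightarrow> ('a \<Rightarrow> 'b) \<Rightarrow> bool" where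
  "coarse_map X dX Y dY f \<longleftrightarrow>
     (\<forall>x\<in>X. f x \<in> Y) \<and>
     (\<forall>R>0. \<exists>S>0. \<forall>x\<in>X. \<forall>x'\<in>X. dX x x' \<le> R \<longrightarrow> dY (f x) (f x') \<le> S) \<and>
     (\<forall>B. mbounded Y dY B \<longrightarrow> mbounded X dX {x\<in>X. f x \<in> B})"

definition close_maps :: "'a set \<Rightarrow> ('b \<Rightarrow> 'b \<Rightarrow> real) \<Rightarrow> ('a \<Rightarrow> 'b) \<Rightarrow> ('a \<Rightarrow> 'b) \<Rightarrow> bool" where
  "close_maps X dY f g \<longleftrightarrow> (\<exists>C. \<forall>x\<in>X. dY (f x) (g x) \<le> C)"

end

theory Submission
  imports Defs
begin

lemma Zinf_diff_finite:
  assumes "x \<in> Zinf" "y \<in> Zinf"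
  shows "finite {j. x j \<noteq> y j}"
proof -
  have "{j. x j \<noteq> y j} \<subseteq> {j. x j \<noteq> 0} \<union> {j. y j \<noteq> 0}" by auto
  then show ?thesis using assms unfolding Zinf_def by (auto intro: finite_subset)
qed

lemma dw_sum_over:
  assumes "finite S" "{j. x j \<noteq> y j} \<subseteq> S"
  shows "dw w x y = (\<Sum>j\<in>S. w j * real_of_int \<bar>x j - y j\<bar>)"
  unfolding dw_def
  by (rule sum.mono_neutral_left) (use assms in auto)

lemma dw_sym: "dw w x y = dw w y x"
  unfolding dw_def by (simp add: abs_minus_commute eq_commute)

lemma dw_triangle:
  assumes "x \<in> Zinf" "y \<in> Zinf" "z \<in> Zinf" "\<And>j. w j \<ge> 0"
  shows "dw w x z \<le> dw w x y + dw w y z"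
proof -
  define S where "S = {j. x j \<noteq> y j} \<union> {j. y j \<noteq> z j} \<union> {j. x j \<noteq> z j}"
  have fS: "finite S" unfolding S_def using Zinf_diff_finite assms by auto
  have e1: "dw w x z = (\<Sum>j\<in>S. w j * real_of_int \<bar>x j - z j\<bar>)"
    by (rule dw_sum_over[OF fS]) (auto simp: S_def)
  have e2: "dw w x y = (\<Sum>j\<in>S. w j * real_of_int \<bar>x j - y j\<bar>)"
    by (rule dw_sum_over[OF fS]) (auto simp: S_def)
  have e3: "dw w y z = (\<Sum>j\<in>S. w j * real_of_int \<bar>y j - z j\<bar>)"
    by (rule dw_sum_over[OF fS]) (auto simp: S_def)
  have "(\<Sum>j\<in>S. w j * real_of_int \<bar>x j - z j\<bar>) \<le>
        (\<Sum>j\<in>S. w j * real_of_int \<bar>x j - y j\<bar> + w j * real_of_int \<bar>y j - z j\<bar>)"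
  proof (rule sum_mono)
    fix j
    have "real_of_int \<bar>x j - z j\<bar> \<le> real_of_int \<bar>x j - y j\<bar> + real_of_int \<bar>y j - z j\<bar>"
      by linarith
    then have "w j * real_of_int \<bar>x j - z j\<bar> \<le> w j * (real_of_int \<bar>x j - y j\<bar> + real_of_int \<bar>y j - z j\<bar>)"
      by (rule mult_left_mono) (use assms(4) in auto)
    then show "w j * real_of_int \<bar>x j - z j\<bar> \<le> w j * real_of_int \<bar>x j - y j\<bar> + w j * real_of_int \<bar>y j - z j\<bar>"
      by (simp add: distrib_left)
  qed
  then show ?thesis using e1 e2 e3 by (simp add: sum.distrib)
qed

lemma dw_term_le:
  assumes "x \<in> Zinf" "y \<in> Zinf" "\<And>j. w j \<ge> 0"
  shows "w j * real_of_int \<bar>x j - y j\<bar> \<le> dw w x y"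
proof (cases "x j = y j")
  case True
  have "0 \<le> dw w x y" unfolding dw_def using assms(3) by (auto intro!: sum_nonneg)
  then show ?thesis using True by simp
next
  case False
  show ?thesis unfolding dw_def
    by (rule member_le_sum) (use False Zinf_diff_finite[OF assms(1,2)] assms(3) in auto)
qed

lemma ball_finite:
  assumes c: "c \<in> Zinf"
  shows "finite {y\<in>Zinf. dw (\<lambda>n. real n + 1) c y \<le> S}"
proof -
  define N where "N = nat \<lceil>S\<rceil>"
  define M where "M = \<lceil>S\<rceil>"
  let ?B = "{y\<in>Zinf. dw (\<lambda>n. real n + 1) c y \<le> S}"
  have Pr: "(\<forall>j. N \<le> j \<longrightarrow> y j = c j) \<and> (\<forall>j. \<bar>y j - c j\<bar> \<le> M)" if yB: "y \<in> ?B" for y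
  proof -
    have yZ: "y \<in> Zinf" and d: "dw (\<lambda>n. real n + 1) c y \<le> S" using yB by auto
    have t: "(real j + 1) * real_of_int \<bar>c j - y j\<bar> \<le> S" for j
      using dw_term_le[OF c yZ, of "\<lambda>n. real n + 1" j] d by simp
    have A: "y j = c j" if "N \<le> j" for j
    proof (rule ccontr)
      assume "y j \<noteq> c j"
      then have "real_of_int \<bar>c j - y j\<bar> \<ge> 1" by linarith
      then have "(real j + 1) * 1 \<le> (real j + 1) * real_of_int \<bar>c j - y j\<bar>"
        by (intro mult_left_mono) auto
      then have "real j + 1 \<le> S" using t[of j] by (simp only: mult_1_right)
      moreover have "real N \<le> real j" using that by simp
      moreover have "S \<le> real N" unfolding N_def by linarith
      ultimately show False by simp
    qed
    have B: "\<bar>y j - c j\<bar> \<le> M" for j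
    proof -
      have "1 * real_of_int \<bar>c j - y j\<bar> \<le> (real j + 1) * real_of_int \<bar>c j - y j\<bar>"
        by (intro mult_right_mono) auto
      then have "real_of_int \<bar>c j - y j\<bar> \<le> S" using t[of j] by simp
      then have "real_of_int \<bar>y j - c j\<bar> \<le> S" by (simp add: abs_minus_commute)
      then show ?thesis unfolding M_def by linarith
    qed
    show ?thesis using A B by blast
  qed
  let ?h = "\<lambda>y. restrict y {..<N}"
  have inj: "inj_on ?h ?B"
  proof (rule inj_onI)
    fix y z assume yB: "y \<in> ?B" and zB: "z \<in> ?B" and e: "?h y = ?h z"
    show "y = z"
    proof
      fix j
      show "y j = z j"
      proof (cases "j < N")
        case True then show ?thesis using fun_cong[OF e, of j] by simp
      next
        case False then show ?thesis using Pr[OF yB] Pr[OF zB] by simp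
      qed
    qed
  qed
  have "?h ` ?B \<subseteq> PiE {..<N} (\<lambda>j. {c j - M .. c j + M})"
  proof
    fix u assume "u \<in> ?h ` ?B"
    then obtain y where yB: "y \<in> ?B" and u: "u = ?h y" by blast
    have "\<bar>y j - c j\<bar> \<le> M" for j using Pr[OF yB] by blast
    then show "u \<in> PiE {..<N} (\<lambda>j. {c j - M .. c j + M})"
      unfolding u by (auto simp: PiE_def Pi_def abs_le_iff) (smt (verit))+
  qed
  moreover have "finite (PiE {..<N} (\<lambda>j. {c j - M .. c j + M}))"
    by (rule finite_PiE) auto
  ultimately have "finite (?h ` ?B)" by (rule finite_subset)
  then show ?thesis using inj finite_imageD by blast
qed

theorem proposition7p3p4:
  shows "\<not> (\<exists>f g.
            coarse_map Zinf (dw (\<lambda>n. real n + 1)) Zinf (dw (\<lambda>n. 1)) f \<and>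
            coarse_map Zinf (dw (\<lambda>n. 1)) Zinf (dw (\<lambda>n. real n + 1)) g \<and>
            close_maps Zinf (dw (\<lambda>n. real n + 1)) (g \<circ> f) id \<and>
            close_maps Zinf (dw (\<lambda>n. 1)) (f \<circ> g) id)"
proof
  assume "\<exists>f g.
            coarse_map Zinf (dw (\<lambda>n. real n + 1)) Zinf (dw (\<lambda>n. 1)) f \<and>
            coarse_map Zinf (dw (\<lambda>n. 1)) Zinf (dw (\<lambda>n. real n + 1)) g \<and>
            close_maps Zinf (dw (\<lambda>n. real n + 1)) (g \<circ> f) id \<and>
            close_maps Zinf (dw (\<lambda>n. 1)) (f \<circ> g) id"
  then obtain f g where cf: "coarse_map Zinf (dw (\<lambda>n. real n + 1)) Zinf (dw (\<lambda>n. 1)) f"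
    and cg: "coarse_map Zinf (dw (\<lambda>n. 1)) Zinf (dw (\<lambda>n. real n + 1)) g"
    and cl: "close_maps Zinf (dw (\<lambda>n. 1)) (f \<circ> g) id" by blast
  from cl obtain C where C: "\<And>x. x \<in> Zinf \<Longrightarrow> dw (\<lambda>n. 1) (f (g x)) x \<le> C"
    unfolding close_maps_def by auto
  have fY: "\<And>x. x \<in> Zinf \<Longrightarrow> f x \<in> Zinf" using cf unfolding coarse_map_def by blast
  have gY: "\<And>x. x \<in> Zinf \<Longrightarrow> g x \<in> Zinf" using cg unfolding coarse_map_def by blast
  define n :: int where "n = \<lceil>C\<rceil> + 1"
  have n_pos: "n > 0"
  proof -
    have "0 \<le> dw (\<lambda>n. 1) (f (g (\<lambda>_. 0))) (\<lambda>_. 0)" unfolding dw_def by (auto intro!: sum_nonneg)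
    moreover have "(\<lambda>_. 0::int) \<in> Zinf" unfolding Zinf_def by simp
    ultimately have "C \<ge> 0" using C by fastforce
    then show ?thesis unfolding n_def by linarith
  qed
  define xs where "xs = (\<lambda>j::nat. \<lambda>i::nat. if i = j then n else 0)"
  define z :: "nat \<Rightarrow> int" where "z = (\<lambda>_. 0)"
  have zZ: "z \<in> Zinf" unfolding Zinf_def z_def by simp
  have xsZ: "xs j \<in> Zinf" for j
  proof -
    have "{i. xs j i \<noteq> 0} \<subseteq> {j}" unfolding xs_def by auto
    then show ?thesis unfolding Zinf_def by (auto intro: finite_subset)
  qed
  have dz: "dw (\<lambda>n. 1) z (xs j) = real_of_int n" for j
  proof -
    have "{i. z i \<noteq> xs j i} = {j}" unfolding z_def xs_def using n_pos by auto
    then show ?thesis unfolding dw_def z_def xs_def using n_pos by simp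
  qed
  from cg have "\<exists>S>0. \<forall>x\<in>Zinf. \<forall>x'\<in>Zinf. dw (\<lambda>n. 1) x x' \<le> real_of_int n \<longrightarrow>
        dw (\<lambda>n. real n + 1) (g x) (g x') \<le> S"
    unfolding coarse_map_def using n_pos by simp
  then obtain S where S: "\<And>x x'. x \<in> Zinf \<Longrightarrow> x' \<in> Zinf \<Longrightarrow> dw (\<lambda>n. 1) x x' \<le> real_of_int n \<Longrightarrow>
        dw (\<lambda>n. real n + 1) (g x) (g x') \<le> S" by blast
  have img: "range (\<lambda>j. g (xs j)) \<subseteq> {y\<in>Zinf. dw (\<lambda>n. real n + 1) (g z) y \<le> S}"
    using S[OF zZ xsZ] dz gY xsZ by auto
  have fin: "finite (range (\<lambda>j. g (xs j)))"
    by (rule finite_subset[OF img ball_finite[OF gY[OF zZ]]])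
  have "\<not> inj (\<lambda>j. g (xs j))"
    using fin finite_imageD infinite_UNIV_nat by blast
  then obtain j k where jk: "j \<noteq> k" "g (xs j) = g (xs k)" unfolding inj_def by blast
  have djk: "dw (\<lambda>n. 1) (xs j) (xs k) = 2 * real_of_int n"
  proof -
    have "{i. xs j i \<noteq> xs k i} = {j, k}" unfolding xs_def using n_pos jk(1) by auto
    then show ?thesis unfolding dw_def xs_def using jk(1) n_pos by simp
  qed
  have "dw (\<lambda>n. 1) (xs j) (xs k) \<le> dw (\<lambda>n. 1) (xs j) (f (g (xs j))) + dw (\<lambda>n. 1) (f (g (xs j))) (xs k)"
    by (rule dw_triangle) (auto intro: xsZ fY gY)
  also have "\<dots> \<le> C + C"
    using C[OF xsZ, of j] C[OF xsZ, of k] jk(2) by (simp add: dw_sym[of _ "xs j"])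
  finally have "2 * real_of_int n \<le> 2 * C" using djk by simp
  moreover have "C < real_of_int n" unfolding n_def by linarith
  ultimately show False by linarith
qed

end
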